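(* There exist an absolute constant $\varepsilon_0\in(0,\frac12)$ and an absolute constant $C>0$ such that the following holds. Let $0<\varepsilon<\varepsilon_0$, let $n\in\mathbb{N}$ with $n>10^5\varepsilon^{-9/2}$, and let $A\subset\mathbb{N}$ satisfy $$\forall x\in\llbracket n^{1/3},\varepsilon n\rrbracket,\ \forall m\in\llbracket 2x,2\varepsilon^{-1}x\rrbracket:\quad \big|A\cap\llbracket m-2x,m-x\rrbracket\big|>\varepsilon x^{2/3}\log\Big(\frac nx\Big).$$ Then there exists $B\subset\llbracket n^{1/3},2\varepsilon n\rrbracket$ with $|B|\le C\varepsilon^{-2/3}n^{1/3}$ and $$\forall t\in\llbracket 2n^{1/3},2n\rrbracket:\quad \big|\llbracket 2n^{1/3},t\rrbracket\setminus(A+B)\big|\le\varepsilon t.$$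
   Context: For real $u\le v$, $\llbracket u,v\rrbracket$ denotes the set of integers in $[u,v]$. $A+B=\{a+b:a\in A,b\in B\}$. *)

theory Defs
  imports "HOL-Analysis.Analysis"
begin

definition nat_ival :: "real \<Rightarrow> real \<Rightarrow> nat set" where
  "nat_ival u v = {k::nat. u \<le> real k \<and> real k \<le> v}"

definition sumset :: "nat set \<Rightarrow> nat set \<Rightarrow> nat set" where
  "sumset A B = {a + b | a b. a \<in> A \<and> b \<in> B}"

end

theory Submission
  imports Defs
begin



lemma sumset_insert: "sumset A (insert b B) = sumset A B \<union> {y. b \<le> y \<and> y - b \<in> A}"
  unfolding sumset_def by (auto, force)

lemma greedy_step:
  fixes U S :: "nat set" and \<delta> :: real
  assumes U: "finite U" and S: "finite S" "S \<noteq> {}"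
    and cnt: "\<forall>y\<in>U. \<delta> * card S \<le> card {b\<in>S. b \<le> y \<and> y - b \<in> A}"
  shows "\<exists>b\<in>S. \<delta> * card U \<le> card {y\<in>U. b \<le> y \<and> y - b \<in> A}"
proof (rule ccontr)
  assume "\<not> ?thesis"
  hence lt: "\<forall>b\<in>S. real (card {y\<in>U. b \<le> y \<and> y - b \<in> A}) < \<delta> * card U" by auto
  have "(\<Sum>b\<in>S. real (card {y\<in>U. b \<le> y \<and> y - b \<in> A})) < (\<Sum>b\<in>S. \<delta> * card U)"
    using lt S by (intro sum_strict_mono) auto
  also have "\<dots> = (\<Sum>y\<in>U. \<delta> * card S)" by simp
  also have "\<dots> \<le> (\<Sum>y\<in>U. real (card {b\<in>S. b \<le> y \<and> y - b \<in> A}))"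
    using cnt by (intro sum_mono) auto
  also have "\<dots> = real (\<Sum>y\<in>U. card {b\<in>S. b \<le> y \<and> y - b \<in> A})" by simp
  also have "(\<Sum>y\<in>U. card {b\<in>S. b \<le> y \<and> y - b \<in> A}) = (\<Sum>b\<in>S. card {y\<in>U. b \<le> y \<and> y - b \<in> A})"
    using sum_multicount_gen[OF U S(1), of "\<lambda>y b. b \<le> y \<and> y - b \<in> A" "\<lambda>b. card {y\<in>U. b \<le> y \<and> y - b \<in> A}"]
    by simp
  finally show False by simp
qed

lemma greedy:
  fixes U S :: "nat set" and \<delta> :: real
  assumes U: "finite U" and S: "finite S" "S \<noteq> {}"
    and cnt: "\<forall>y\<in>U. \<delta> * card S \<le> card {b\<in>S. b \<le> y \<and> y - b \<in> A}"
  shows "\<exists>B\<subseteq>S. card B \<le> k \<and> card (U - sumset A B) \<le> (1 - \<delta>) ^ k * card U"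
proof (cases "U = {}")
  case True
  thus ?thesis by (intro exI[of _ "{}"]) auto
next
  case False
  then obtain y where y: "y \<in> U" by auto
  have "\<delta> * card S \<le> card {b\<in>S. b \<le> y \<and> y - b \<in> A}" using cnt y by auto
  also have "card {b\<in>S. b \<le> y \<and> y - b \<in> A} \<le> card S" using S by (intro card_mono) auto
  finally have d1: "\<delta> \<le> 1" using S by (simp add: card_gt_0_iff)
  show ?thesis
  proof (induction k)
    case 0
    thus ?case by (intro exI[of _ "{}"]) (auto simp: sumset_def)
  next
    case (Suc k)
    then obtain B where B: "B \<subseteq> S" "card B \<le> k" "card (U - sumset A B) \<le> (1 - \<delta>) ^ k * card U" by auto
    define U' where "U' = U - sumset A B"
    have fU': "finite U'" using U unfolding U'_def by auto
    obtain b where b: "b \<in> S" "\<delta> * card U' \<le> card {y\<in>U'. b \<le> y \<and> y - b \<in> A}"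
      using greedy_step[OF fU' S, of \<delta> A] cnt unfolding U'_def by auto
    have eq: "U - sumset A (insert b B) = U' - {y\<in>U'. b \<le> y \<and> y - b \<in> A}"
      unfolding U'_def sumset_insert by auto
    have "real (card (U - sumset A (insert b B))) = real (card U') - card {y\<in>U'. b \<le> y \<and> y - b \<in> A}"
      unfolding eq using fU' by (subst card_Diff_subset) (auto simp: of_nat_diff card_mono)
    also have "\<dots> \<le> (1 - \<delta>) * card U'" using b by (simp add: algebra_simps)
    also have "\<dots> \<le> (1 - \<delta>) * ((1 - \<delta>) ^ k * card U)"
      using B d1 unfolding U'_def by (intro mult_left_mono) auto
    finally have "real (card (U - sumset A (insert b B))) \<le> (1 - \<delta>) ^ Suc k * card U" by simp
    moreover have "card (insert b B) \<le> Suc (card B)"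
      by (cases "finite B") (auto simp: card_insert_if)
    hence "card (insert b B) \<le> Suc k" using B(2) by linarith
    ultimately show ?case using B b by (intro exI[of _ "insert b B"]) auto
  qed
qed



lemma nat_ival_sub: "nat_ival u v \<subseteq> {..nat \<lfloor>v\<rfloor>}"
  unfolding nat_ival_def by (auto simp: le_nat_floor)

lemma finite_nat_ival[simp]: "finite (nat_ival u v)"
  using nat_ival_sub finite_subset by blast

lemma card_nat_ival_le: "real (card (nat_ival u v)) \<le> max 0 (v + 1)"
proof (cases "v < 0")
  case True
  hence "nat_ival u v = {}" unfolding nat_ival_def by auto
  thus ?thesis by simp
next
  case False
  have "card (nat_ival u v) \<le> card {..nat \<lfloor>v\<rfloor>}" by (intro card_mono nat_ival_sub) auto
  hence "real (card (nat_ival u v)) \<le> real (nat \<lfloor>v\<rfloor>) + 1" by simp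
  also have "\<dots> \<le> v + 1" using False by linarith
  finally show ?thesis by simp
qed

lemma scale:
  fixes eps :: real and n x :: nat and A :: "nat set"
  assumes e: "0 < eps" "eps \<le> 1/16" and x1: "1 \<le> x" and xn: "real x \<le> eps * n"
    and H: "\<forall>m\<in>nat_ival (2 * real x) (2 * real x / eps).
       real (card (A \<inter> nat_ival (real m - 2 * real x) (real m - real x)))
         > eps * real x powr (2/3) * ln (real n / real x)"
  shows "\<exists>B\<subseteq>{x..2*x}. real (card B) \<le> 7 * real x powr (1/3) / eps \<and>
     real (card (nat_ival (2 * real x) (2 * real x / eps) - sumset A B)) \<le> eps * x / 2"
proof -
  define U where "U = nat_ival (2 * real x) (2 * real x / eps)"
  define S where "S = {x..2*x}"
  define L where "L = ln (real n / real x)"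
  define \<delta> where "\<delta> = eps * real x powr (2/3) * L / (x + 1)"
  have cS: "card S = x + 1" unfolding S_def by simp
  have xpos: "real x > 0" using x1 by simp
  have "0 < eps * real n" using xn xpos by linarith
  hence npos: "real n > 0" using e by (simp add: zero_less_mult_iff)
  have q: "real n / real x \<ge> 1 / eps" using xn e xpos by (simp add: field_simps)
  have "0 < 1 / eps" using e by simp
  hence LL: "L \<ge> ln (1 / eps)" unfolding L_def using q npos xpos by (subst ln_le_cancel_iff) auto
  have lne: "ln (1/eps) > 0" using e by simp
  have Lpos: "L > 0" using LL lne by linarith
  have cnt: "\<forall>y\<in>U. \<delta> * card S \<le> card {b\<in>S. b \<le> y \<and> y - b \<in> A}"
  proof
    fix y assume y: "y \<in> U"
    have "\<delta> * card S = eps * real x powr (2/3) * L" unfolding \<delta>_def cS by simp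
    also have "\<dots> < card (A \<inter> nat_ival (real y - 2 * real x) (real y - real x))"
      using H y unfolding U_def L_def by auto
    also have "card (A \<inter> nat_ival (real y - 2 * real x) (real y - real x)) \<le> card {b\<in>S. b \<le> y \<and> y - b \<in> A}"
    proof (rule card_inj_on_le[where f = "\<lambda>a. y - a"])
      show "inj_on (\<lambda>a. y - a) (A \<inter> nat_ival (real y - 2 * real x) (real y - real x))"
        by (rule inj_onI) (auto simp: nat_ival_def)
      show "(\<lambda>a. y - a) ` (A \<inter> nat_ival (real y - 2 * real x) (real y - real x)) \<subseteq> {b\<in>S. b \<le> y \<and> y - b \<in> A}"
      proof
        fix b assume "b \<in> (\<lambda>a. y - a) ` (A \<inter> nat_ival (real y - 2 * real x) (real y - real x))"
        then obtain a where a: "a \<in> A" "real y - 2 * real x \<le> real a" "real a \<le> real y - real x" "b = y - a"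
          unfolding nat_ival_def by auto
        have "real (a + x) \<le> real y" "real y \<le> real (a + 2 * x)" using a by auto
        hence h: "a + x \<le> y" "y \<le> a + 2 * x" by (simp only: of_nat_le_iff)+
        show "b \<in> {b\<in>S. b \<le> y \<and> y - b \<in> A}" using h a unfolding S_def by auto
      qed
      show "finite {b\<in>S. b \<le> y \<and> y - b \<in> A}" unfolding S_def by auto
    qed
    finally show "\<delta> * card S \<le> card {b\<in>S. b \<le> y \<and> y - b \<in> A}" by simp
  qed
  show ?thesis
  proof (cases "U = {}")
    case True
    thus ?thesis unfolding U_def using e by (intro exI[of _ "{}"]) auto
  next
    case False
    then obtain y where y: "y \<in> U" by auto
    have "\<delta> * card S \<le> card {b\<in>S. b \<le> y \<and> y - b \<in> A}" using cnt y by auto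
    also have "card {b\<in>S. b \<le> y \<and> y - b \<in> A} \<le> card S" unfolding S_def by (intro card_mono) auto
    finally have d1: "\<delta> \<le> 1" using cS by simp
    have x23: "real x powr (2/3) > 0" using xpos by simp
    define k where "k = nat \<lceil>3 * (x + 1) / (eps * real x powr (2/3))\<rceil>"
    obtain B where B: "B \<subseteq> S" "card B \<le> k" "card (U - sumset A B) \<le> (1 - \<delta>) ^ k * card U"
      using greedy[of U S \<delta> A k] cnt unfolding U_def S_def by auto
    have kge: "real k \<ge> 3 * (x + 1) / (eps * real x powr (2/3))" unfolding k_def by linarith
    have "\<delta> * k \<ge> \<delta> * (3 * (x + 1) / (eps * real x powr (2/3)))"
      using kge d1 unfolding \<delta>_def using e x23 Lpos
      by (intro mult_left_mono) (auto intro!: divide_nonneg_pos mult_nonneg_nonneg)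
    also have "\<delta> * (3 * (x + 1) / (eps * real x powr (2/3))) = 3 * L"
    proof -
      have gen: "\<And>a c::real. a \<noteq> 0 \<Longrightarrow> c \<noteq> 0 \<Longrightarrow> a * L / c * (3 * c / a) = 3 * L"
        by (simp add: field_simps)
      have "eps * real x powr (2/3) \<noteq> 0" "real (x + 1) \<noteq> 0" using e x23 by auto
      then show ?thesis unfolding \<delta>_def of_nat_mult of_nat_numeral by (rule gen)
    qed
    finally have dk: "\<delta> * k \<ge> 3 * ln (1 / eps)" using LL by linarith
    have "(1 - \<delta>) ^ k \<le> exp (- \<delta>) ^ k"
      using d1 exp_ge_add_one_self[of "-\<delta>"] by (intro power_mono) auto
    also have "\<dots> = exp (real k * (- \<delta>))" by (rule exp_of_nat_mult[symmetric])
    also have "\<dots> \<le> exp (- 3 * ln (1 / eps))" using dk by (simp add: algebra_simps)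
    also have "exp (- 3 * ln (1 / eps)) = eps ^ 3" using e
    proof -
      have "- 3 * ln (1 / eps) = real 3 * ln eps" using e by (simp add: ln_div)
      hence "exp (- 3 * ln (1 / eps)) = exp (ln eps) ^ 3" by (simp only: exp_of_nat_mult)
      thus ?thesis using e by simp
    qed
    finally have p: "(1 - \<delta>) ^ k \<le> eps ^ 3" .
    have cU: "real (card U) \<le> 3 * x / eps"
    proof -
      have "real (card U) \<le> max 0 (2 * real x / eps + 1)" unfolding U_def by (rule card_nat_ival_le)
      also have "\<dots> = 2 * real x / eps + 1" using e by auto
      also have "\<dots> \<le> 3 * x / eps" using e x1 by (simp add: field_simps)
      finally show ?thesis .
    qed
    have "real (card (U - sumset A B)) \<le> eps ^ 3 * (3 * x / eps)"
    proof -
      have "real (card (U - sumset A B)) \<le> (1 - \<delta>) ^ k * card U" by (rule B(3))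
      also have "\<dots> \<le> eps ^ 3 * card U" by (rule mult_right_mono[OF p]) simp
      also have "\<dots> \<le> eps ^ 3 * (3 * x / eps)" by (rule mult_left_mono[OF cU]) (use e in simp)
      finally show ?thesis .
    qed
    also have "\<dots> \<le> eps * x / 2"
    proof -
      have "eps ^ 3 * (3 * x / eps) = (eps * x / 2) * (6 * eps)" using e by (simp add: field_simps power2_eq_square power3_eq_cube)
      also have "\<dots> \<le> (eps * x / 2) * 1"
      proof (rule mult_left_mono)
        show "6 * eps \<le> 1" using e by simp
      qed (use e in auto)
      finally show ?thesis by simp
    qed
    finally have err: "real (card (U - sumset A B)) \<le> eps * x / 2" .
    have x13: "real x powr (1/3) \<ge> 1" using x1 by (simp add: ge_one_powr_ge_zero)
    have xx: "real x / real x powr (2/3) = real x powr (1/3)"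
    proof -
      have "real x = real x powr (1/3) * real x powr (2/3)" using xpos
        by (simp add: powr_add[symmetric])
      thus ?thesis using x23 by (simp add: field_simps)
    qed
    have "real k \<le> 3 * (x + 1) / (eps * real x powr (2/3)) + 1"
    proof -
      have r0: "3 * (x + 1) / (eps * real x powr (2/3)) \<ge> 0" using e x23 by simp
      hence "real (nat \<lceil>3 * (x + 1) / (eps * real x powr (2/3))\<rceil>) = of_int \<lceil>3 * (x + 1) / (eps * real x powr (2/3))\<rceil>"
        by simp
      also have "\<dots> \<le> 3 * (x + 1) / (eps * real x powr (2/3)) + 1" by (rule of_int_ceiling_le_add_one)
      finally show ?thesis unfolding k_def by simp
    qed
    also have "3 * (x + 1) / (eps * real x powr (2/3)) \<le> 3 * (2 * x) / (eps * real x powr (2/3))"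
      using e x23 x1 by (intro divide_right_mono) auto
    also have "3 * (2 * x) / (eps * real x powr (2/3)) = 6 * real x powr (1/3) / eps"
      using xx e x23 by (simp add: field_simps)
    finally have k6: "real k \<le> 6 * real x powr (1/3) / eps + 1" by simp
    have "(1::real) \<le> real x powr (1/3) / eps" using x13 e by (simp add: field_simps)
    with k6 have "real k \<le> 7 * real x powr (1/3) / eps" by (simp add: field_simps)
    with B err show ?thesis unfolding U_def S_def by (intro exI[of _ B]) auto
  qed
qed


lemma sumset_mono: "B \<subseteq> B' \<Longrightarrow> sumset A B \<subseteq> sumset A B'"
  unfolding sumset_def by blast

lemma card_nat_ival_le2:
  assumes "0 \<le> u" "u \<le> v"
  shows "real (card (nat_ival u v)) \<le> v - u + 1"
proof -
  have "nat_ival u v \<subseteq> {nat \<lceil>u\<rceil>..nat \<lfloor>v\<rfloor>}"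
    unfolding nat_ival_def by (auto simp: le_nat_floor nat_le_iff ceiling_le_iff)
  hence "card (nat_ival u v) \<le> card {nat \<lceil>u\<rceil>..nat \<lfloor>v\<rfloor>}" by (intro card_mono) auto
  hence "real (card (nat_ival u v)) \<le> real (nat \<lfloor>v\<rfloor> + 1 - nat \<lceil>u\<rceil>)" by simp
  also have "\<dots> \<le> v - u + 1" using assms
    by (simp add: of_nat_diff) linarith
  finally show ?thesis .
qed

lemma card_two:
  assumes "0 \<le> c"
  shows "card {k::nat. c \<le> real k \<and> real k < c + 2} \<le> 2"
proof -
  have "{k::nat. c \<le> real k \<and> real k < c + 2} \<subseteq> {nat \<lceil>c\<rceil>, nat \<lceil>c\<rceil> + 1}"
  proof
    fix k assume k: "k \<in> {k::nat. c \<le> real k \<and> real k < c + 2}"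
    have "\<lceil>c\<rceil> \<le> int k" using k by (simp add: ceiling_le_iff)
    moreover have cc: "real_of_int \<lceil>c\<rceil> \<ge> c" by simp
    have "real_of_int (int k) < real_of_int (\<lceil>c\<rceil> + 2)" using k cc by (simp; linarith)
    hence "int k < \<lceil>c\<rceil> + 2" by (simp only: of_int_less_iff)
    ultimately show "k \<in> {nat \<lceil>c\<rceil>, nat \<lceil>c\<rceil> + 1}" by auto
  qed
  hence "card {k::nat. c \<le> real k \<and> real k < c + 2} \<le> card {nat \<lceil>c\<rceil>, nat \<lceil>c\<rceil> + 1}"
    by (intro card_mono) auto
  also have "\<dots> \<le> 2" by (simp add: card_insert_if)
  finally show ?thesis .
qed

definition "Mis0 c A B T = card (nat_ival c T - sumset A B)"

context
  fixes eps :: real and c :: real and A :: "nat set"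
  assumes e: "0 < eps" "eps \<le> 1/16" and c0: "0 \<le> c"
begin

abbreviation "Mis B T \<equiv> Mis0 c A B T"

lemma step:
  fixes x' x :: nat and B Bx :: "nat set"
  assumes xx: "1 \<le> x'" "x' \<le> x" "x \<le> 8 * x'"
    and a: "\<forall>t::nat. real t \<le> 2 * real x' / eps \<longrightarrow> real (Mis B t) \<le> eps * t / 2 + 2"
    and b: "real (Mis B (2 * real x' / eps)) \<le> eps * x' + 2"
    and s: "real (card (nat_ival (2 * real x) (2 * real x / eps) - sumset A Bx)) \<le> eps * x / 2"
  shows "\<forall>t::nat. real t \<le> 2 * real x / eps \<longrightarrow> real (Mis (B \<union> Bx) t) \<le> eps * t / 2 + 2"
    and "real (Mis (B \<union> Bx) (2 * real x / eps)) \<le> eps * x' + 2 + eps * x / 2"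
proof -
  have x8: "2 * real x \<le> 2 * real x' / eps"
  proof -
    have "real x \<le> 8 * real x'" using xx by simp
    also have "\<dots> \<le> (1 / eps) * x'"
    proof (rule mult_right_mono)
      show "8 \<le> 1 / eps" using e by (simp add: field_simps)
    qed simp
    finally have "real x \<le> real x' / eps" by simp
    hence "2 * real x \<le> 2 * (real x' / eps)" by simp
    thus ?thesis by simp
  qed
  have sub: "nat_ival c T - sumset A (B \<union> Bx) \<subseteq> (nat_ival c (2 * real x' / eps) - sumset A B) \<union>
      (nat_ival (2 * real x) (2 * real x / eps) - sumset A Bx)" if T: "T \<le> 2 * real x / eps" for T
  proof
    fix k assume k: "k \<in> nat_ival c T - sumset A (B \<union> Bx)"
    have n1: "k \<notin> sumset A B" "k \<notin> sumset A Bx" using k sumset_mono[of B "B \<union> Bx" A]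
      sumset_mono[of Bx "B \<union> Bx" A] by auto
    show "k \<in> (nat_ival c (2 * real x' / eps) - sumset A B) \<union> (nat_ival (2 * real x) (2 * real x / eps) - sumset A Bx)"
    proof (cases "real k \<le> 2 * real x' / eps")
      case True thus ?thesis using k n1 unfolding nat_ival_def by auto
    next
      case False thus ?thesis using k n1 x8 T unfolding nat_ival_def by auto
    qed
  qed
  have bnd: "real (Mis (B \<union> Bx) T) \<le> eps * x' + 2 + eps * x / 2" if T: "T \<le> 2 * real x / eps" for T
  proof -
    have "Mis (B \<union> Bx) T \<le> card ((nat_ival c (2 * real x' / eps) - sumset A B) \<union>
      (nat_ival (2 * real x) (2 * real x / eps) - sumset A Bx))"
      unfolding Mis0_def by (intro card_mono sub[OF T]) auto
    also have "\<dots> \<le> Mis B (2 * real x' / eps) + card (nat_ival (2 * real x) (2 * real x / eps) - sumset A Bx)"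
      unfolding Mis0_def by (rule card_Un_le)
    finally have "real (Mis (B \<union> Bx) T) \<le> real (Mis B (2 * real x' / eps)) + real (card (nat_ival (2 * real x) (2 * real x / eps) - sumset A Bx))"
      by linarith
    thus ?thesis using b s by linarith
  qed
  show "real (Mis (B \<union> Bx) (2 * real x / eps)) \<le> eps * x' + 2 + eps * x / 2" by (rule bnd) simp
  show "\<forall>t::nat. real t \<le> 2 * real x / eps \<longrightarrow> real (Mis (B \<union> Bx) t) \<le> eps * t / 2 + 2"
  proof (intro allI impI)
    fix t :: nat assume t: "real t \<le> 2 * real x / eps"
    show "real (Mis (B \<union> Bx) t) \<le> eps * t / 2 + 2"
    proof (cases "real t \<le> 2 * real x' / eps")
      case True
      have "Mis (B \<union> Bx) t \<le> Mis B t" unfolding Mis0_def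
        using sumset_mono[of B "B \<union> Bx" A] by (intro card_mono) auto
      thus ?thesis using a True by (smt (verit) of_nat_le_iff)
    next
      case False
      hence "eps * t / 2 > x'" using e by (simp add: field_simps)
      moreover have "eps * x' + eps * x / 2 \<le> x'"
      proof -
        have "eps * x' + eps * x / 2 \<le> eps * x' + eps * (8 * real x') / 2"
          using e xx by (intro add_left_mono mult_left_mono divide_right_mono) auto
        also have "\<dots> = (5 * eps) * x'" by simp
        also have "\<dots> \<le> 1 * real x'" using e by (intro mult_right_mono) auto
        finally show ?thesis by simp
      qed
      ultimately show ?thesis using bnd[OF t] by linarith
    qed
  qed
qed

lemma base:
  fixes x0 :: nat and B :: "nat set"
  assumes x0: "real x0 < c / 2 + 1" "c / 2 \<le> real x0" "1 \<le> c / 2"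
    and s: "real (card (nat_ival (2 * real x0) (2 * real x0 / eps) - sumset A B)) \<le> eps * x0 / 2"
  shows "\<forall>t::nat. real t \<le> 2 * real x0 / eps \<longrightarrow> real (Mis B t) \<le> eps * t / 2 + 2"
    and "real (Mis B (2 * real x0 / eps)) \<le> eps * x0 + 2"
proof -
  have bnd: "real (Mis B T) \<le> 2 + eps * x0 / 2" if T: "T \<le> 2 * real x0 / eps" for T
  proof -
    have subs: "nat_ival c T - sumset A B \<subseteq> {k::nat. c \<le> real k \<and> real k < c + 2} \<union>
       (nat_ival (2 * real x0) (2 * real x0 / eps) - sumset A B)"
    proof
      fix k assume k: "k \<in> nat_ival c T - sumset A B"
      hence k1: "c \<le> real k" "real k \<le> T" "k \<notin> sumset A B" unfolding nat_ival_def by auto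
      show "k \<in> {k::nat. c \<le> real k \<and> real k < c + 2} \<union>
       (nat_ival (2 * real x0) (2 * real x0 / eps) - sumset A B)"
      proof (cases "real k < c + 2")
        case True thus ?thesis using k1 by simp
      next
        case False
        hence "2 * real x0 \<le> real k" using x0 by linarith
        thus ?thesis using k1 T unfolding nat_ival_def by simp
      qed
    qed
    have "Mis B T \<le> card ({k::nat. c \<le> real k \<and> real k < c + 2} \<union>
       (nat_ival (2 * real x0) (2 * real x0 / eps) - sumset A B))" unfolding Mis0_def
    proof (rule card_mono)
      have "{k::nat. c \<le> real k \<and> real k < c + 2} \<subseteq> nat_ival c (c + 2)" unfolding nat_ival_def by auto
      hence "finite {k::nat. c \<le> real k \<and> real k < c + 2}" by (rule finite_subset) simp
      thus "finite ({k::nat. c \<le> real k \<and> real k < c + 2} \<union>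
       (nat_ival (2 * real x0) (2 * real x0 / eps) - sumset A B))" by simp
    qed (rule subs)
    also have "\<dots> \<le> card {k::nat. c \<le> real k \<and> real k < c + 2} + card (nat_ival (2 * real x0) (2 * real x0 / eps) - sumset A B)"
      by (rule card_Un_le)
    finally show ?thesis using card_two[OF c0] s by linarith
  qed
  show "real (Mis B (2 * real x0 / eps)) \<le> eps * x0 + 2" using bnd[OF order_refl] e
    mult_nonneg_nonneg[of eps "real x0"] by linarith
  show "\<forall>t::nat. real t \<le> 2 * real x0 / eps \<longrightarrow> real (Mis B t) \<le> eps * t / 2 + 2"
  proof (intro allI impI)
    fix t :: nat assume "real t \<le> 2 * real x0 / eps"
    show "real (Mis B t) \<le> eps * t / 2 + 2"
    proof (cases "c \<le> real t")
      case False
      hence "nat_ival c t = {}" unfolding nat_ival_def by auto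
      thus ?thesis unfolding Mis0_def using e by simp
    next
      case True
      hence "real x0 \<le> t" using x0 by linarith
      hence "eps * x0 / 2 \<le> eps * t / 2" using e by simp
      thus ?thesis using bnd[OF \<open>real t \<le> 2 * real x0 / eps\<close>] by linarith
    qed
  qed
qed

end


lemma eight_cube: "(8::real) powr (1/3) = 2"
proof -
  have "(8::real) = 2 powr 3" by (simp add: powr_numeral)
  hence "(8::real) powr (1/3) = 2 powr (3 * (1/3))" by (simp add: powr_powr)
  thus ?thesis by simp
qed

context
  fixes eps :: real and n :: nat and A :: "nat set"
  assumes e: "0 < eps" "eps < 1/16"
    and nbig: "real n > 10^5 * eps powr (-9/2)"
    and Hyp: "\<forall>x\<in>nat_ival (real n powr (1/3)) (eps * real n).
         \<forall>m\<in>nat_ival (2 * real x) (2 * real x / eps).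
           real (card (A \<inter> nat_ival (real m - 2 * real x) (real m - real x)))
             > eps * real x powr (2/3) * ln (real n / real x)"
begin

lemma e': "eps \<le> 1/16" using e by simp

lemma F0: "eps ^ 3 * real n \<ge> 100000"
proof -
  have p1: "eps powr (3/2) \<le> 1" using e by (intro powr_le1) auto
  have p2: "eps powr (3/2) > 0" using e by simp
  have "eps powr (-3/2) = inverse (eps powr (3/2))" by (simp add: powr_minus[symmetric])
  hence g1: "eps powr (-3/2) \<ge> 1" using p1 p2 by (simp add: one_le_inverse_iff)
  have "eps ^ 3 = eps powr 3" using e by (simp add: powr_numeral)
  hence "eps ^ 3 * eps powr (-9/2) = eps powr (3 + (-9/2))" by (simp only: powr_add)
  also have "(3::real) + (-9/2) = -3/2" by simp
  finally have eq: "eps ^ 3 * eps powr (-9/2) = eps powr (-3/2)" by simp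
  have "eps ^ 3 * real n \<ge> eps ^ 3 * (10^5 * eps powr (-9/2))"
    using nbig e by (intro mult_left_mono) auto
  also have "eps ^ 3 * (10^5 * eps powr (-9/2)) = 10^5 * eps powr (-3/2)" using eq by simp
  finally show ?thesis using g1 by simp
qed

lemma npos: "real n > 0"
proof -
  have "eps ^ 3 * real n > 0" using F0 by linarith
  thus ?thesis using e by (simp add: zero_less_mult_iff)
qed

lemma F1: "(real n powr (1/3)) ^ 3 = real n"
proof -
  have "(real n powr (1/3)) ^ 3 = (real n powr (1/3)) powr 3" using npos by (simp add: powr_numeral)
  also have "\<dots> = real n" by (simp add: powr_powr)
  finally show ?thesis .
qed

lemma F2: "eps * real n powr (1/3) \<ge> 2"
proof (rule ccontr)
  assume "\<not> ?thesis"
  hence "eps * real n powr (1/3) < 2" by simp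
  hence "(eps * real n powr (1/3)) ^ 3 < 2 ^ 3" using e
    by (intro power_strict_mono) auto
  also have "(eps * real n powr (1/3)) ^ 3 = eps ^ 3 * real n" by (simp add: power_mult_distrib F1)
  finally show False using F0 by simp
qed

lemma F3: "real n powr (1/3) \<ge> 1"
proof -
  have "eps * real n powr (1/3) \<le> 1 * real n powr (1/3)" using e by (intro mult_right_mono) auto
  thus ?thesis using F2 by linarith
qed

lemma F4: "real n powr (1/3) + 1 \<le> eps * real n"
proof -
  define r where "r = real n powr (1/3)"
  have "eps * real n = (eps * r) * r ^ 2" unfolding r_def using F1 by (simp add: power3_eq_cube power2_eq_square)
  also have "\<dots> \<ge> 2 * r ^ 2" using F2 unfolding r_def by (intro mult_right_mono) auto
  finally have "eps * real n \<ge> 2 * r ^ 2" .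
  moreover have "2 * r ^ 2 \<ge> r + 1"
  proof -
    have "r * r \<ge> 1 * r" using F3 unfolding r_def by (intro mult_right_mono) auto
    moreover have "r \<ge> 1" using F3 unfolding r_def .
    ultimately show ?thesis unfolding power2_eq_square by linarith
  qed
  ultimately show ?thesis unfolding r_def by linarith
qed

lemma F5: "eps ^ 2 * real n \<ge> 7"
proof -
  have "eps ^ 3 * real n \<le> eps ^ 2 * real n"
  proof -
    have "eps ^ 3 = eps * eps ^ 2" by (simp add: power3_eq_cube power2_eq_square)
    also have "\<dots> \<le> 1 * eps ^ 2" using e by (intro mult_right_mono) auto
    finally show ?thesis using npos by (intro mult_right_mono) auto
  qed
  thus ?thesis using F0 by linarith
qed

lemma scale_at:
  fixes x :: nat
  assumes "real n powr (1/3) \<le> real x" "real x \<le> eps * real n"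
  shows "\<exists>B\<subseteq>{x..2*x}. real (card B) \<le> 7 * real x powr (1/3) / eps \<and>
     real (card (nat_ival (2 * real x) (2 * real x / eps) - sumset A B)) \<le> eps * x / 2"
proof (rule scale[OF e(1) e' _ assms(2)])
  show "1 \<le> x" using assms(1) F3 by linarith
  have "x \<in> nat_ival (real n powr (1/3)) (eps * real n)" using assms unfolding nat_ival_def by auto
  thus "\<forall>m\<in>nat_ival (2 * real x) (2 * real x / eps).
       real (card (A \<inter> nat_ival (real m - 2 * real x) (real m - real x)))
         > eps * real x powr (2/3) * ln (real n / real x)" using Hyp by auto
qed

abbreviation "rr \<equiv> real n powr (1/3)"
abbreviation "x0 \<equiv> nat \<lceil>rr\<rceil>"

lemma x0_props: "rr \<le> real x0" "real x0 < rr + 1" "1 \<le> x0" "real x0 \<le> eps * real n"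
proof -
  have r0: "rr \<ge> 1" by (rule F3)
  have eq: "real x0 = of_int \<lceil>rr\<rceil>" using r0 by simp
  show "rr \<le> real x0" unfolding eq by simp
  show "real x0 < rr + 1" unfolding eq by linarith
  thus "real x0 \<le> eps * real n" using F4 by linarith
  show "1 \<le> x0" using \<open>rr \<le> real x0\<close> r0 by linarith
qed

lemma Bsub: "x \<le> eps * real n \<Longrightarrow> rr \<le> real x \<Longrightarrow> {x..2*x} \<subseteq> nat_ival rr (2 * eps * real n)"
  unfolding nat_ival_def by auto

lemma chain: "real (x0 * 8 ^ j) \<le> eps * real n \<Longrightarrow>
  \<exists>B. B \<subseteq> nat_ival rr (2 * eps * real n) \<and>
    real (card B) \<le> 14 * real (x0 * 8 ^ j) powr (1/3) / eps \<and>
    (\<forall>t::nat. real t \<le> 2 * real (x0 * 8 ^ j) / eps \<longrightarrow> real (Mis0 (2 * rr) A B t) \<le> eps * t / 2 + 2) \<and>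
    real (Mis0 (2 * rr) A B (2 * real (x0 * 8 ^ j) / eps)) \<le> eps * real (x0 * 8 ^ j) + 2"
proof (induction j)
  case 0
  have x0n: "real x0 \<le> eps * real n" using x0_props by simp
  obtain B where B: "B \<subseteq> {x0..2*x0}" "real (card B) \<le> 7 * real x0 powr (1/3) / eps"
    "real (card (nat_ival (2 * real x0) (2 * real x0 / eps) - sumset A B)) \<le> eps * x0 / 2"
    using scale_at[OF x0_props(1) x0n] by blast
  have c0: "0 \<le> 2 * rr" by simp
  note bs = base[OF e(1) e' c0]
  have h: "real x0 < 2 * rr / 2 + 1" "2 * rr / 2 \<le> real x0" "1 \<le> 2 * rr / 2" using x0_props F3 by auto
  have "real (card B) \<le> 14 * real x0 powr (1/3) / eps"
    using B(2) e by (simp add: divide_right_mono)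
  moreover have "B \<subseteq> nat_ival rr (2 * eps * real n)" using B(1) Bsub[OF x0n x0_props(1)] by auto
  ultimately show ?case unfolding power_0 mult_1_right using bs[OF h B(3)] by blast
next
  case (Suc j)
  define xj where "xj = x0 * 8 ^ j"
  define x where "x = x0 * 8 ^ Suc j"
  have xx: "x = 8 * xj" unfolding x_def xj_def by simp
  have xn: "real x \<le> eps * real n" using Suc.prems unfolding x_def .
  have xjx: "xj \<le> x" unfolding xx by simp
  hence xjx': "real xj \<le> real x" by simp
  hence xjn: "real xj \<le> eps * real n" using xn by linarith
  have xj1: "1 \<le> xj" unfolding xj_def using x0_props(3) by simp
  have xjr: "rr \<le> real xj"
  proof -
    have "1 \<le> (8::nat) ^ j" by simp
    hence "x0 * 1 \<le> x0 * 8 ^ j" by (rule mult_le_mono2)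
    hence "x0 \<le> xj" unfolding xj_def by simp
    hence "real x0 \<le> real xj" by (simp only: of_nat_le_iff)
    thus ?thesis using x0_props(1) by linarith
  qed
  have xr: "rr \<le> real x" using xjr xjx' by linarith
  obtain B where B: "B \<subseteq> nat_ival rr (2 * eps * real n)" "real (card B) \<le> 14 * real xj powr (1/3) / eps"
    "\<forall>t::nat. real t \<le> 2 * real xj / eps \<longrightarrow> real (Mis0 (2 * rr) A B t) \<le> eps * t / 2 + 2"
    "real (Mis0 (2 * rr) A B (2 * real xj / eps)) \<le> eps * real xj + 2"
    using Suc.IH xjn unfolding xj_def by blast
  obtain Bx where Bx: "Bx \<subseteq> {x..2*x}" "real (card Bx) \<le> 7 * real x powr (1/3) / eps"
    "real (card (nat_ival (2 * real x) (2 * real x / eps) - sumset A Bx)) \<le> eps * x / 2"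
    using scale_at[OF xr xn] by blast
  have c0: "0 \<le> 2 * rr" by simp
  have xx': "1 \<le> xj" "xj \<le> x" "x \<le> 8 * xj" using xj1 xjx xx by auto
  note st = step[OF e(1) e' c0 xx' B(3) B(4) Bx(3)]
  have p: "real x powr (1/3) = 2 * real xj powr (1/3)"
    unfolding xx of_nat_mult using eight_cube by (simp add: powr_mult)
  have "real (card (B \<union> Bx)) \<le> real (card B) + real (card Bx)"
    using card_Un_le[of B Bx] by linarith
  also have "\<dots> \<le> 14 * real xj powr (1/3) / eps + 7 * real x powr (1/3) / eps" using B(2) Bx(2) by linarith
  also have "\<dots> = 14 * real x powr (1/3) / eps" unfolding p by (simp add: field_simps)
  finally have cd: "real (card (B \<union> Bx)) \<le> 14 * real x powr (1/3) / eps" .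
  have "eps * real xj + 2 + eps * real x / 2 \<le> eps * real x + 2"
    unfolding xx using e by simp
  hence st2: "real (Mis0 (2 * rr) A (B \<union> Bx) (2 * real x / eps)) \<le> eps * real x + 2" using st(2) by linarith
  have "B \<union> Bx \<subseteq> nat_ival rr (2 * eps * real n)" using B(1) Bx(1) Bsub[OF xn xr] by auto
  thus ?case using cd st(1) st2 unfolding x_def by blast
qed

lemma main_ctx: "\<exists>B. B \<subseteq> nat_ival rr (2 * eps * real n) \<and>
    real (card B) \<le> 21 * eps powr (-2/3) * rr \<and>
    (\<forall>t\<in>nat_ival (2 * rr) (2 * real n).
       real (card (nat_ival (2 * rr) (real t) - sumset A B)) \<le> eps * real t)"
proof -
  define P where "P j \<longleftrightarrow> eps * real n < real (x0 * 8 ^ j)" for j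
  have exP: "\<exists>j. P j"
  proof
    define j where "j = nat \<lceil>eps * real n\<rceil>"
    have "j < 2 ^ j" by (rule less_exp)
    also have "(2::nat) ^ j \<le> 8 ^ j" by (rule power_mono) auto
    also have "(8::nat) ^ j = 1 * 8 ^ j" by simp
    also have "\<dots> \<le> x0 * 8 ^ j" using x0_props(3) by (intro mult_le_mono1)
    finally have "j < x0 * 8 ^ j" .
    hence "real j < real (x0 * 8 ^ j)" by (simp only: of_nat_less_iff)
    moreover have "eps * real n \<le> real j" unfolding j_def by linarith
    ultimately show "P j" unfolding P_def by linarith
  qed
  define j1 where "j1 = (LEAST j. P j)"
  have Pj1: "P j1" unfolding j1_def using exP by (rule LeastI_ex)
  have "\<not> P 0" unfolding P_def using x0_props(4) by simp
  hence j1pos: "j1 \<noteq> 0" using Pj1 by (metis)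
  define J where "J = j1 - 1"
  have "J < j1" unfolding J_def using j1pos by simp
  hence nPJ: "\<not> P J" unfolding j1_def by (rule not_less_Least)
  define xJ where "xJ = x0 * 8 ^ J"
  have xJn: "real xJ \<le> eps * real n" using nPJ unfolding P_def xJ_def by simp
  have "j1 = Suc J" unfolding J_def using j1pos by simp
  hence x8: "eps * real n < 8 * real xJ" using Pj1 unfolding P_def xJ_def by (simp add: mult.commute mult.left_commute)
  obtain B where B: "B \<subseteq> nat_ival rr (2 * eps * real n)" "real (card B) \<le> 14 * real xJ powr (1/3) / eps"
    "\<forall>t::nat. real t \<le> 2 * real xJ / eps \<longrightarrow> real (Mis0 (2 * rr) A B t) \<le> eps * t / 2 + 2"
    "real (Mis0 (2 * rr) A B (2 * real xJ / eps)) \<le> eps * real xJ + 2"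
    using chain[OF xJn[unfolded xJ_def]] unfolding xJ_def by blast
  define X where "X = nat \<lfloor>eps * real n\<rfloor>"
  have en0: "eps * real n \<ge> 0" using e npos by simp
  have Xeq: "real X = of_int \<lfloor>eps * real n\<rfloor>" unfolding X_def using en0 by simp
  have Xn: "real X \<le> eps * real n" unfolding Xeq by simp
  have Xn1: "real X > eps * real n - 1" unfolding Xeq by linarith
  have xJX: "xJ \<le> X" unfolding X_def using xJn by (simp add: le_nat_floor)
  hence xJX': "real xJ \<le> real X" by (simp only: of_nat_le_iff)
  have X8: "X \<le> 8 * xJ"
  proof -
    have "real X \<le> real (8 * xJ)" using Xn x8 by simp
    thus ?thesis by (simp only: of_nat_le_iff)
  qed
  have xJ1: "1 \<le> xJ" unfolding xJ_def using x0_props(3) by simp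
  have xJr: "rr \<le> real xJ"
  proof -
    have "1 \<le> (8::nat) ^ J" by simp
    hence "x0 * 1 \<le> x0 * 8 ^ J" by (rule mult_le_mono2)
    hence "x0 \<le> xJ" unfolding xJ_def by simp
    hence "real x0 \<le> real xJ" by (simp only: of_nat_le_iff)
    thus ?thesis using x0_props(1) by linarith
  qed
  have Xr: "rr \<le> real X" using xJr xJX' by linarith
  obtain Bx where Bx: "Bx \<subseteq> {X..2*X}" "real (card Bx) \<le> 7 * real X powr (1/3) / eps"
    "real (card (nat_ival (2 * real X) (2 * real X / eps) - sumset A Bx)) \<le> eps * X / 2"
    using scale_at[OF Xr Xn] by blast
  have c0: "0 \<le> 2 * rr" by simp
  have xx': "1 \<le> xJ" "xJ \<le> X" "X \<le> 8 * xJ" using xJ1 xJX X8 by auto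
  note st = step[OF e(1) e' c0 xx' B(3) B(4) Bx(3)]
  define BB where "BB = B \<union> Bx"
  have sub: "BB \<subseteq> nat_ival rr (2 * eps * real n)" unfolding BB_def using B(1) Bx(1) Bsub[OF Xn Xr] by auto
  have "real (card BB) \<le> real (card B) + real (card Bx)"
    unfolding BB_def using card_Un_le[of B Bx] by linarith
  also have "\<dots> \<le> 14 * real xJ powr (1/3) / eps + 7 * real X powr (1/3) / eps" using B(2) Bx(2) by linarith
  also have "\<dots> \<le> 14 * real X powr (1/3) / eps + 7 * real X powr (1/3) / eps"
  proof -
    have "real xJ powr (1/3) \<le> real X powr (1/3)" using xJX' by (intro powr_mono2) auto
    hence "14 * real xJ powr (1/3) / eps \<le> 14 * real X powr (1/3) / eps" using e by (intro divide_right_mono) auto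
    thus ?thesis by linarith
  qed
  also have "\<dots> = 21 * real X powr (1/3) / eps" by simp
  also have "\<dots> \<le> 21 * (eps * real n) powr (1/3) / eps"
  proof -
    have "real X powr (1/3) \<le> (eps * real n) powr (1/3)" using Xn by (intro powr_mono2) auto
    thus ?thesis using e by (intro divide_right_mono) auto
  qed
  also have "(eps * real n) powr (1/3) = eps powr (1/3) * rr" using e by (simp add: powr_mult)
  also have "eps powr (1/3) = eps powr (-2/3) * eps"
  proof -
    have "eps powr (-2/3 + 1) = eps powr (-2/3) * eps powr 1" by (rule powr_add)
    thus ?thesis using e by simp
  qed
  also have "21 * (eps powr (-2/3) * eps * rr) / eps = 21 * eps powr (-2/3) * rr" using e by simp
  finally have cd: "real (card BB) \<le> 21 * eps powr (-2/3) * rr" .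
  have F2': "eps * (2 * rr) \<ge> 4" using F2 by simp
  have concl: "real (Mis0 (2 * rr) A BB t) \<le> eps * real t" if t: "t \<in> nat_ival (2 * rr) (2 * real n)" for t :: nat
  proof (cases "real t \<le> 2 * real X / eps")
    case True
    have "real (Mis0 (2 * rr) A BB t) \<le> eps * t / 2 + 2" using st(1) True unfolding BB_def by blast
    moreover have "eps * (2 * rr) \<le> eps * t" using t e unfolding nat_ival_def by (intro mult_left_mono) auto
    ultimately show ?thesis using F2' by linarith
  next
    case False
    have tn: "real t \<le> 2 * real n" "2 * rr \<le> real t" using t unfolding nat_ival_def by auto
    have subs: "nat_ival (2 * rr) (real t) - sumset A BB \<subseteq>
        (nat_ival (2 * rr) (2 * real X / eps) - sumset A BB) \<union> nat_ival (2 * real X / eps) (real t)"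
      unfolding nat_ival_def by auto
    have "Mis0 (2 * rr) A BB t \<le> card ((nat_ival (2 * rr) (2 * real X / eps) - sumset A BB) \<union> nat_ival (2 * real X / eps) (real t))"
      unfolding Mis0_def by (rule card_mono[OF _ subs]) simp
    also have "\<dots> \<le> Mis0 (2 * rr) A BB (2 * real X / eps) + card (nat_ival (2 * real X / eps) (real t))"
      unfolding Mis0_def by (rule card_Un_le)
    finally have m1: "real (Mis0 (2 * rr) A BB t) \<le> real (Mis0 (2 * rr) A BB (2 * real X / eps)) + real (card (nat_ival (2 * real X / eps) (real t)))"
      by linarith
    have m2: "real (card (nat_ival (2 * real X / eps) (real t))) \<le> real t - 2 * real X / eps + 1"
      using False e by (intro card_nat_ival_le2) auto
    have m3: "real (Mis0 (2 * rr) A BB (2 * real X / eps)) \<le> eps * real xJ + 2 + eps * real X / 2"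
      using st(2) unfolding BB_def .
    have h1: "eps * real xJ \<le> eps * real X" using xJX' e by (intro mult_left_mono) auto
    have h2: "eps * real X \<le> eps * (eps * real n)" using Xn e by (intro mult_left_mono) auto
    have h3: "eps * (eps * real n) \<le> (1/16) * (eps * real n)" using e en0 by (intro mult_right_mono) auto
    have h6: "2 * real X / eps \<ge> 2 * real n - 2 / eps"
    proof -
      have "2 * real X / eps \<ge> 2 * (eps * real n - 1) / eps" using Xn1 e by (intro divide_right_mono) auto
      also have "2 * (eps * real n - 1) / eps = 2 * real n - 2 / eps" using e by (simp add: field_simps)
      finally show ?thesis .
    qed
    have h7: "eps * real t \<ge> 2 * real X"
    proof -
      have "2 * real X / eps \<le> real t" using False by simp
      thus ?thesis using e by (simp add: field_simps)
    qed
    have h5: "7 / eps \<le> eps * real n"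
    proof -
      have "7 \<le> eps * (eps * real n)" using F5 by (simp add: power2_eq_square mult.assoc)
      thus ?thesis using e by (simp add: field_simps)
    qed
    have h4: "2 / eps + 5 \<le> 7 / eps"
    proof -
      have "5 \<le> 5 / eps" using e by (simp add: field_simps)
      thus ?thesis by simp
    qed
    show ?thesis using m1 m2 m3 h1 h2 h3 h4 h5 h6 h7 tn Xn1 by linarith
  qed
  show ?thesis using sub cd concl unfolding Mis0_def by blast
qed

end

theorem lemma5p1:
  shows "\<exists>eps0::real. \<exists>C::real. 0 < eps0 \<and> eps0 < 1/2 \<and> 0 < C \<and>
    (\<forall>eps::real. \<forall>n::nat. \<forall>A::nat set.
      0 < eps \<and> eps < eps0 \<and> real n > 10^5 * eps powr (-9/2) \<and>
      (\<forall>x\<in>nat_ival (real n powr (1/3)) (eps * real n).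
         \<forall>m\<in>nat_ival (2 * real x) (2 * real x / eps).
           real (card (A \<inter> nat_ival (real m - 2 * real x) (real m - real x)))
             > eps * real x powr (2/3) * ln (real n / real x))
      \<longrightarrow> (\<exists>B. B \<subseteq> nat_ival (real n powr (1/3)) (2 * eps * real n) \<and>
              real (card B) \<le> C * eps powr (-2/3) * real n powr (1/3) \<and>
              (\<forall>t\<in>nat_ival (2 * real n powr (1/3)) (2 * real n).
                 real (card (nat_ival (2 * real n powr (1/3)) (real t) - sumset A B))
                   \<le> eps * real t)))"
proof -
  have "0 < (1/16::real) \<and> (1/16::real) < 1/2 \<and> 0 < (21::real) \<and>
    (\<forall>eps::real. \<forall>n::nat. \<forall>A::nat set.
      0 < eps \<and> eps < 1/16 \<and> real n > 10^5 * eps powr (-9/2) \<and>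
      (\<forall>x\<in>nat_ival (real n powr (1/3)) (eps * real n).
         \<forall>m\<in>nat_ival (2 * real x) (2 * real x / eps).
           real (card (A \<inter> nat_ival (real m - 2 * real x) (real m - real x)))
             > eps * real x powr (2/3) * ln (real n / real x))
      \<longrightarrow> (\<exists>B. B \<subseteq> nat_ival (real n powr (1/3)) (2 * eps * real n) \<and>
              real (card B) \<le> 21 * eps powr (-2/3) * real n powr (1/3) \<and>
              (\<forall>t\<in>nat_ival (2 * real n powr (1/3)) (2 * real n).
                 real (card (nat_ival (2 * real n powr (1/3)) (real t) - sumset A B))
                   \<le> eps * real t)))"
    using main_ctx by auto
  thus ?thesis by blast
qed

end
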